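(* Let $S,T\subseteq\mathbb{Z}_{>0}$ be finite and $x\in T\triangleleft S$. If $T_{<x}\setminus(T\triangleleft S)$ is empty, then $(T\setminus\{x\})\triangleleft S=(T\triangleleft S)\setminus\{x\}$. Otherwise, $(T\setminus\{x\})\triangleleft S=((T\triangleleft S)\setminus\{x\})\cup\{x'\}$, where $x'=\max(T_{<x}\setminus(T\triangleleft S))$.
   Context: For a finite set $T\subseteq\mathbb{Z}_{>0}$, $T_{<x}=\{t\in T:t<x\}$. For finite $S,T\subseteq\mathbb{Z}_{>0}$, $T\triangleleft S$ is computed by going through the elements of $S$ from largest to smallest; each $s$ picks the largest element of $T$ that is less than $s$ and not yet picked (if one exists); $T\triangleleft S$ is the set of picked elements. *)

theory Defs
  imports Main
begin

definition pick_step :: "nat set \<Rightarrow> nat \<Rightarrow> nat set \<Rightarrow> nat set" where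
  "pick_step T s P =
     (let C = {t \<in> T. t < s \<and> t \<notin> P} in if C = {} then P else insert (Max C) P)"

definition tri :: "nat set \<Rightarrow> nat set \<Rightarrow> nat set" (infixl "\<triangleleft>" 65) where
  "tri T S = fold (pick_step T) (rev (sorted_list_of_set S)) {}"

definition below :: "nat set \<Rightarrow> nat \<Rightarrow> nat set" where
  "below T x = {t \<in> T. t < x}"

end

theory Submission
  imports Defs
begin

definition Phi :: "nat set \<Rightarrow> nat \<Rightarrow> nat set \<Rightarrow> nat set" where
  "Phi T x P = (if x \<notin> P then P else
     (if below T x - P = {} then P - {x} else (P - {x}) \<union> {Max (below T x - P)}))"

lemma step:
  assumes fin: "finite T"
  shows "pick_step (T - {x}) s (Phi T x P) = Phi T x (pick_step T s P)"
proof -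
  define C where "C = {t \<in> T. t < s \<and> t \<notin> P}"
  have finC: "finite C" using fin unfolding C_def by auto
  have ps: "pick_step T s P = (if C = {} then P else insert (Max C) P)"
    unfolding pick_step_def C_def Let_def by simp
  have finB: "\<And>Q. finite (below T x - Q)" using fin unfolding below_def by auto
  show ?thesis
  proof (cases "x \<in> P")
    case False
    have L: "pick_step (T - {x}) s (Phi T x P) = (if C - {x} = {} then P else insert (Max (C - {x})) P)"
      unfolding pick_step_def Phi_def C_def Let_def using False
      by (simp add: set_diff_eq conj_commute) (smt (verit, ccfv_SIG) Collect_cong)
    show ?thesis
    proof (cases "C = {}")
      case True
      then show ?thesis using L ps False by (simp add: Phi_def)
    next
      case Cne: False
      show ?thesis
      proof (cases "Max C = x")
        case False
        have m: "Max C \<in> C - {x}" using Max_in[OF finC Cne] False by auto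
        have "Max (C - {x}) = Max C"
          by (rule Max_eqI) (use finC m in auto)
        then show ?thesis using L ps Cne m \<open>x \<notin> P\<close> False by (auto simp: Phi_def)
      next
        case True
        have eq: "C - {x} = below T x - insert x P"
        proof
          show "C - {x} \<subseteq> below T x - insert x P"
          proof
            fix t assume t: "t \<in> C - {x}"
            have "t \<le> x" using Max_ge[OF finC, of t] t True by auto
            then show "t \<in> below T x - insert x P" using t unfolding C_def below_def by auto
          qed
        next
          have xC: "x \<in> C" using Max_in[OF finC Cne] True by simp
          show "below T x - insert x P \<subseteq> C - {x}"
            using xC unfolding C_def below_def by auto
        qed
        show ?thesis using L ps Cne True eq \<open>x \<notin> P\<close>
          by (auto simp: Phi_def)
      qed
    qed
  next
    case xP: True
    show ?thesis
    proof (cases "below T x - P = {}")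
      case Bempty: True
      have ph: "Phi T x P = P - {x}" using xP Bempty by (simp add: Phi_def)
      have CC: "{t \<in> T - {x}. t < s \<and> t \<notin> P - {x}} = C" using xP unfolding C_def by auto
      have L: "pick_step (T - {x}) s (Phi T x P) = (if C = {} then P - {x} else insert (Max C) (P - {x}))"
        unfolding ph pick_step_def CC Let_def by simp
      show ?thesis
      proof (cases "C = {}")
        case True
        then show ?thesis using L ps ph by simp
      next
        case False
        have m: "Max C \<in> C" using Max_in[OF finC False] .
        have mx: "Max C > x"
        proof (rule ccontr)
          assume "\<not> Max C > x"
          moreover have "Max C \<noteq> x" using m xP unfolding C_def by auto
          ultimately have "Max C \<in> below T x - P" using m unfolding C_def below_def by auto
          then show False using Bempty by auto
        qed
        have "below T x - insert (Max C) P = {}" using Bempty by auto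
        then show ?thesis using L ps False mx xP by (auto simp: Phi_def)
      qed
    next
      case Bne: False
      define y where "y = Max (below T x - P)"
      have yB: "y \<in> below T x - P" using Max_in[OF finB Bne] y_def by simp
      have yle: "\<And>t. t \<in> below T x - P \<Longrightarrow> t \<le> y" using Max_ge[OF finB] y_def by simp
      have yx: "y < x" "y \<in> T" "y \<notin> P" using yB unfolding below_def by auto
      have ph: "Phi T x P = insert y (P - {x})" using xP Bne y_def by (simp add: Phi_def)
      have CC: "{t \<in> T - {x}. t < s \<and> t \<notin> insert y (P - {x})} = C - {y}" using xP unfolding C_def by auto
      have L: "pick_step (T - {x}) s (Phi T x P) = (if C - {y} = {} then insert y (P - {x}) else insert (Max (C - {y})) (insert y (P - {x})))"
        unfolding ph pick_step_def CC Let_def by simp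
      show ?thesis
      proof (cases "C = {}")
        case True
        then show ?thesis using L ps ph by simp
      next
        case Cne: False
        have m: "Max C \<in> C" using Max_in[OF finC Cne] .
        have mx: "Max C \<noteq> x" using m xP unfolding C_def by auto
        show ?thesis
        proof (cases "Max C = y")
          case False
          have m': "Max C \<in> C - {y}" using m False by auto
          have MM: "Max (C - {y}) = Max C"
            by (rule Max_eqI) (use finC m' in auto)
          have B2: "below T x - insert (Max C) P = (below T x - P) - {Max C}" by auto
          have yB2: "y \<in> below T x - insert (Max C) P" using yB False by auto
          have MB: "Max (below T x - insert (Max C) P) = y"
            by (rule Max_eqI) (use finB yB2 yle in auto)
          show ?thesis using L ps Cne MM m' mx xP MB yB2 by (auto simp: Phi_def)
        next
          case True
          have yC: "y \<in> C" using m True by simp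
          have eq: "C - {y} = below T x - insert y P"
          proof
            show "C - {y} \<subseteq> below T x - insert y P"
            proof
              fix t assume t: "t \<in> C - {y}"
              have "t \<le> y" using Max_ge[OF finC, of t] t True by auto
              then show "t \<in> below T x - insert y P" using t yx unfolding C_def below_def by auto
            qed
          next
            show "below T x - insert y P \<subseteq> C - {y}"
            proof
              fix t assume t: "t \<in> below T x - insert y P"
              have "t \<le> y" using yle t by auto
              then show "t \<in> C - {y}" using t yC unfolding C_def below_def by auto
            qed
          qed
          show ?thesis using L ps Cne True eq xP yx by (auto simp: Phi_def)
        qed
      qed
    qed
  qed
qed

lemma fold_Phi:
  assumes "finite T"
  shows "fold (pick_step (T - {x})) l (Phi T x P) = Phi T x (fold (pick_step T) l P)"
  using assms by (induction l arbitrary: P) (simp_all add: step)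

theorem lemma4p5:
  fixes S T :: "nat set" and x :: nat
  assumes "finite S" and "finite T" and "0 \<notin> S" and "0 \<notin> T"
    and "x \<in> T \<triangleleft> S"
  shows "(below T x - (T \<triangleleft> S) = {} \<longrightarrow>
            (T - {x}) \<triangleleft> S = (T \<triangleleft> S) - {x}) \<and>
         (below T x - (T \<triangleleft> S) \<noteq> {} \<longrightarrow>
            (T - {x}) \<triangleleft> S = ((T \<triangleleft> S) - {x}) \<union> {Max (below T x - (T \<triangleleft> S))})"
proof -
  have "(T - {x}) \<triangleleft> S = Phi T x (T \<triangleleft> S)"
    unfolding tri_def using fold_Phi[OF assms(2), of x _ "{}"] by (simp add: Phi_def)
  then show ?thesis using assms(5) by (simp add: Phi_def)
qed

end
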